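(* Let $s,k$ be positive integers and let $n\ge3(s+1)k-1$. Let $\mathcal F\subset\binom{[n]}{k}$ be a family such that for every $A\in\mathcal F$ there is a positive integer $\ell$ with $|A\cap[3(s+1)\ell-1]|\ge\ell$. Then $$(3s+2)\,|\partial\mathcal F|\ge|\mathcal F|.$$
   Context: $[m]=\{1,\ldots,m\}$; $\binom{X}{k}$ is the family of all $k$-subsets of $X$. For $\mathcal F\subset\binom{[n]}{k}$, its (lower) shadow is $\partial\mathcal F:=\bigcup_{F\in\mathcal F}\binom{F}{k-1}$. *)

theory Defs
  imports Main
begin

definition shadow :: "nat \<Rightarrow> nat set set \<Rightarrow> nat set set" where
  "shadow k \<F> = (\<Union>F\<in>\<F>. {G. G \<subseteq> F \<and> card G = k - 1})"

end

theory Submission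
  imports Defs
begin

definition fA :: "nat \<Rightarrow> nat set \<Rightarrow> nat \<Rightarrow> int" where
  "fA m A x = int x - int m * int (card {y\<in>A. y \<le> x})"

definition muA :: "nat \<Rightarrow> nat set \<Rightarrow> int" where
  "muA m A = Min (fA m A ` A)"

definition xA :: "nat \<Rightarrow> nat set \<Rightarrow> nat" where
  "xA m A = Min {x\<in>A. fA m A x = muA m A}"

lemma xA_props:
  assumes "finite A" "A \<noteq> {}"
  shows "xA m A \<in> A" "fA m A (xA m A) = muA m A" "\<And>y. y \<in> A \<Longrightarrow> muA m A \<le> fA m A y"
    "\<And>y. y \<in> A \<Longrightarrow> y < xA m A \<Longrightarrow> muA m A < fA m A y"
proof -
  have mu_in: "muA m A \<in> fA m A ` A" unfolding muA_def using assms by (intro Min_in) auto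
  then have ne: "{x\<in>A. fA m A x = muA m A} \<noteq> {}" by auto
  have fin: "finite {x\<in>A. fA m A x = muA m A}" using assms by auto
  have xin: "xA m A \<in> {x\<in>A. fA m A x = muA m A}" unfolding xA_def using Min_in[OF fin ne] .
  then show "xA m A \<in> A" "fA m A (xA m A) = muA m A" by auto
  show le: "\<And>y. y \<in> A \<Longrightarrow> muA m A \<le> fA m A y" unfolding muA_def using assms by auto
  show "\<And>y. y \<in> A \<Longrightarrow> y < xA m A \<Longrightarrow> muA m A < fA m A y"
  proof -
    fix y assume y: "y \<in> A" "y < xA m A"
    have "y \<notin> {x\<in>A. fA m A x = muA m A}"
    proof
      assume "y \<in> {x\<in>A. fA m A x = muA m A}"
      then have "xA m A \<le> y" unfolding xA_def using fin by auto
      with y show False by simp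
    qed
    with y le[OF y(1)] show "muA m A < fA m A y" by auto
  qed
qed

lemma key:
  fixes m :: nat
  assumes finG: "finite G" and xG: "x \<notin> G" and x'G: "x' \<notin> G" and xx: "x < x'"
    and A: "A = insert x G" and A': "A' = insert x' G"
    and h1: "fA m A x = \<mu>" and h2: "\<forall>y\<in>A. \<mu> \<le> fA m A y"
    and h3: "fA m A' x' = \<mu>'" and h4: "\<forall>y\<in>A'. y < x' \<longrightarrow> \<mu>' < fA m A' y"
    and neg: "\<mu>' < 0" and x1: "x \<ge> 1"
  shows "\<mu> < \<mu>' \<and> \<mu>' \<le> \<mu> + int m - 2"
proof
  define T where "T = {w\<in>A. w < x'}"
  have finT: "finite T" unfolding T_def A using finG by auto
  have xT: "x \<in> T" unfolding T_def A using xx by auto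
  define z where "z = Max T"
  have zT: "z \<in> T" unfolding z_def using finT xT by (intro Max_in) auto
  have eqT: "{y\<in>A. y \<le> z} = T"
  proof
    show "{y\<in>A. y \<le> z} \<subseteq> T" using zT unfolding T_def by auto
    show "T \<subseteq> {y\<in>A. y \<le> z}" using finT unfolding z_def by (auto simp: T_def)
  qed
  have T2: "T = insert x {y\<in>G. y < x'}" unfolding T_def A using xx by auto
  have c1: "card T = card {y\<in>G. y < x'} + 1" unfolding T2 using finG xG by simp
  have e2: "{y\<in>A'. y \<le> x'} = insert x' {y\<in>G. y < x'}" unfolding A' using x'G by auto
  have c2: "card {y\<in>A'. y \<le> x'} = card {y\<in>G. y < x'} + 1" unfolding e2 using finG x'G by simp
  have "\<mu> \<le> fA m A z" using h2 zT unfolding T_def by auto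
  also have "\<dots> < fA m A' x'" unfolding fA_def eqT c1 c2 using zT unfolding T_def by auto
  finally show "\<mu> < \<mu>'" using h3 by simp
next
  define E where "E = {w\<in>G. w < x}"
  have finE: "finite E" unfolding E_def using finG by auto
  show "\<mu>' \<le> \<mu> + int m - 2"
  proof (cases "E = {}")
    case True
    have "{y\<in>A. y \<le> x} = {x}" unfolding A using True xG unfolding E_def by auto
    then have "\<mu> = int x - int m" using h1 unfolding fA_def by simp
    then show ?thesis using neg x1 by simp
  next
    case False
    define w where "w = Max E"
    have wE: "w \<in> E" unfolding w_def using finE False by (intro Max_in) auto
    have wA': "w \<in> A'" "w < x'" using wE xx unfolding A' E_def by auto
    have lt: "\<mu>' < fA m A' w" using h4 wA' by auto
    have e1: "{y\<in>A'. y \<le> w} = {y\<in>G. y \<le> w}" unfolding A' using wA' by auto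
    have EG: "E = {y\<in>G. y \<le> w}"
    proof
      show "E \<subseteq> {y\<in>G. y \<le> w}" using finE unfolding w_def by (auto simp: E_def)
      show "{y\<in>G. y \<le> w} \<subseteq> E" using wE unfolding E_def by auto
    qed
    have e3: "{y\<in>A. y \<le> x} = insert x E" unfolding A E_def using xG by auto
    have c3: "card {y\<in>A. y \<le> x} = card {y\<in>G. y \<le> w} + 1"
      unfolding e3 using finE xG EG by (simp add: E_def)
    have wx: "w < x" using wE unfolding E_def by auto
    have "\<mu> = int x - int m * (int (card {y\<in>G. y \<le> w}) + 1)" using h1 c3 unfolding fA_def by (simp add: algebra_simps)
    moreover have "fA m A' w = int w - int m * int (card {y\<in>G. y \<le> w})" unfolding fA_def e1 by simp
    ultimately show ?thesis using lt wx by (simp add: algebra_simps)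
  qed
qed

lemma int_set_card:
  fixes S :: "int set"
  assumes "finite S" "S \<noteq> {}" "\<forall>a\<in>S. \<forall>b\<in>S. b \<le> a + int m - 2" "m \<ge> 1"
  shows "card S \<le> m - 1"
proof -
  define a0 where "a0 = Min S"
  have a0S: "a0 \<in> S" unfolding a0_def using assms by auto
  have "S \<subseteq> {a0..a0 + int m - 2}"
    using assms(3) a0S assms(1) unfolding a0_def by auto
  then have "card S \<le> card {a0..a0 + int m - 2}" by (intro card_mono) auto
  also have "\<dots> = m - 1" using assms(4) by simp
  finally show ?thesis .
qed

lemma fiber:
  fixes m :: nat
  assumes m1: "m \<ge> 2" and finF: "finite F"
    and props: "\<forall>A\<in>F. finite A \<and> A \<noteq> {} \<and> 0 \<notin> A \<and> muA m A < 0"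
  shows "card {A\<in>F. A - {xA m A} = G} \<le> m - 1"
proof -
  define Fi where "Fi = {A\<in>F. A - {xA m A} = G}"
  have finFi: "finite Fi" unfolding Fi_def using finF by auto
  have rep: "A = insert (xA m A) G" "xA m A \<notin> G" "finite G" if "A \<in> Fi" for A
  proof -
    have "xA m A \<in> A" using xA_props(1) props that unfolding Fi_def by auto
    then show "A = insert (xA m A) G" "xA m A \<notin> G" using that unfolding Fi_def by auto
    show "finite G" using that props unfolding Fi_def by auto
  qed
  have pair: "muA m A < muA m A' \<and> muA m A' \<le> muA m A + int m - 2"
    if AF: "A \<in> Fi" "A' \<in> Fi" "xA m A < xA m A'" for A A'
  proof (rule key[OF rep(3)[OF AF(1)] rep(2)[OF AF(1)] rep(2)[OF AF(2)] AF(3) rep(1)[OF AF(1)] rep(1)[OF AF(2)]])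
    have pA: "finite A \<and> A \<noteq> {} \<and> 0 \<notin> A \<and> muA m A < 0" using props AF unfolding Fi_def by auto
    have pA': "finite A' \<and> A' \<noteq> {} \<and> 0 \<notin> A' \<and> muA m A' < 0" using props AF unfolding Fi_def by auto
    show "fA m A (xA m A) = muA m A" using xA_props(2) pA by blast
    show "\<forall>y\<in>A. muA m A \<le> fA m A y" using xA_props(3) pA by blast
    show "fA m A' (xA m A') = muA m A'" using xA_props(2) pA' by blast
    show "\<forall>y\<in>A'. y < xA m A' \<longrightarrow> muA m A' < fA m A' y" using xA_props(4) pA' by blast
    show "muA m A' < 0" using pA' by blast
    have "xA m A \<in> A" using xA_props(1) pA by blast
    then show "1 \<le> xA m A" using pA by (cases "xA m A") auto
  qed
  have inj: "inj_on (muA m) Fi"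
  proof
    fix A A' assume AF: "A \<in> Fi" "A' \<in> Fi" "muA m A = muA m A'"
    have "xA m A = xA m A'"
    proof (rule ccontr)
      assume "xA m A \<noteq> xA m A'"
      then consider "xA m A < xA m A'" | "xA m A' < xA m A" by linarith
      then show False using pair AF by (cases) fastforce+
    qed
    then show "A = A'" using rep(1)[OF AF(1)] rep(1)[OF AF(2)] by simp
  qed
  show ?thesis
  proof (cases "Fi = {}")
    case True then show ?thesis unfolding Fi_def by (simp only:) simp
  next
    case False
    have "\<forall>a\<in>muA m ` Fi. \<forall>b\<in>muA m ` Fi. b \<le> a + int m - 2"
    proof (intro ballI)
      fix a b assume "a \<in> muA m ` Fi" "b \<in> muA m ` Fi"
      then obtain A B where AB: "A \<in> Fi" "B \<in> Fi" "a = muA m A" "b = muA m B" by auto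
      consider "xA m A < xA m B" | "xA m B < xA m A" | "xA m A = xA m B" by linarith
      then show "b \<le> a + int m - 2"
      proof cases
        case 1 then show ?thesis using pair[OF AB(1,2)] AB by simp
      next
        case 2 then show ?thesis using pair[OF AB(2,1)] AB m1 by simp
      next
        case 3
        then have "A = B" using rep(1)[OF AB(1)] rep(1)[OF AB(2)] by simp
        then show ?thesis using AB m1 by simp
      qed
    qed
    then have "card (muA m ` Fi) \<le> m - 1"
      using int_set_card[of "muA m ` Fi" m] finFi False m1 by auto
    then show ?thesis using card_image[OF inj] unfolding Fi_def by simp
  qed
qed

theorem lemma4:
  fixes s k n :: nat and \<F> :: "nat set set"
  assumes "s \<ge> 1" and "k \<ge> 1"
    and "n \<ge> 3 * (s + 1) * k - 1"
    and "\<F> \<subseteq> {A. A \<subseteq> {1..n} \<and> card A = k}"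
    and "\<forall>A\<in>\<F>. \<exists>l::nat. l \<ge> 1 \<and> card (A \<inter> {1..3 * (s + 1) * l - 1}) \<ge> l"
  shows "(3 * s + 2) * card (shadow k \<F>) \<ge> card \<F>"
proof -
  define m where "m = 3 * (s + 1)"
  have m1: "m \<ge> 1" unfolding m_def by simp
  have m2: "m \<ge> 2" unfolding m_def by simp
  have finF: "finite \<F>"
    using assms(4) by (rule finite_subset) (auto intro: finite_subset[of _ "Pow {1..n}"])
  have neg: "muA m A < 0" if AF: "A \<in> \<F>" for A
  proof -
    obtain l where l: "l \<ge> 1" "card (A \<inter> {1..m * l - 1}) \<ge> l"
      using assms(5) AF unfolding m_def by auto
    have Asub: "A \<subseteq> {1..n}" using assms(4) AF by auto
    then have finA: "finite A" using finite_subset by blast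
    define S where "S = A \<inter> {1..m * l - 1}"
    have finS: "finite S" unfolding S_def using finA by auto
    have "S \<noteq> {}" using l unfolding S_def by auto
    define z where "z = Max S"
    have zS: "z \<in> S" unfolding z_def using finS \<open>S \<noteq> {}\<close> by (intro Max_in) auto
    have eq: "{y\<in>A. y \<le> z} = S"
    proof
      show "{y\<in>A. y \<le> z} \<subseteq> S" using zS Asub unfolding S_def by auto
      show "S \<subseteq> {y\<in>A. y \<le> z}" using finS unfolding z_def by (auto simp: S_def)
    qed
    have zle: "z \<le> m * l - 1" using zS unfolding S_def by auto
    have "int z < int m * int (card S)"
    proof -
      have "m * l \<ge> 1" using l m1 by simp
      then have "int z \<le> int (m * l) - 1" using zle by linarith
      also have "\<dots> < int m * int l" by simp
      also have "\<dots> \<le> int m * int (card S)" using l unfolding S_def by (intro mult_left_mono) auto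
      finally show ?thesis .
    qed
    then have "fA m A z < 0" unfolding fA_def eq by simp
    moreover have "muA m A \<le> fA m A z" unfolding muA_def using finA zS unfolding S_def by auto
    ultimately show ?thesis by simp
  qed
  have props: "\<forall>A\<in>\<F>. finite A \<and> A \<noteq> {} \<and> 0 \<notin> A \<and> muA m A < 0"
  proof
    fix A assume AF: "A \<in> \<F>"
    have Asub: "A \<subseteq> {1..n}" "card A = k" using assms(4) AF by auto
    then show "finite A \<and> A \<noteq> {} \<and> 0 \<notin> A \<and> muA m A < 0"
      using neg[OF AF] assms(2) finite_subset by fastforce
  qed
  define \<phi> where "\<phi> A = A - {xA m A}" for A
  have finSh: "finite (shadow k \<F>)"
  proof (rule finite_subset)
    show "shadow k \<F> \<subseteq> Pow {1..n}" unfolding shadow_def using assms(4) by auto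
  qed auto
  have mem: "\<phi> A \<in> shadow k \<F>" if AF: "A \<in> \<F>" for A
  proof -
    have p: "finite A" "A \<noteq> {}" using props AF by auto
    have "xA m A \<in> A" using xA_props(1)[OF p] .
    moreover have "card A = k" using assms(4) AF by auto
    ultimately have "card (\<phi> A) = k - 1" unfolding \<phi>_def using p by simp
    then show ?thesis unfolding shadow_def \<phi>_def using AF by auto
  qed
  have "\<F> \<subseteq> (\<Union>G\<in>shadow k \<F>. {A\<in>\<F>. \<phi> A = G})" using mem by auto
  then have "card \<F> \<le> card (\<Union>G\<in>shadow k \<F>. {A\<in>\<F>. \<phi> A = G})"
    by (intro card_mono) (auto intro!: finite_UN_I finSh simp: finF)
  also have "\<dots> \<le> (\<Sum>G\<in>shadow k \<F>. card {A\<in>\<F>. \<phi> A = G})"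
    by (rule card_UN_le[OF finSh])
  also have "\<dots> \<le> (\<Sum>G\<in>shadow k \<F>. m - 1)"
    by (intro sum_mono) (use fiber[OF m2 finF props] in \<open>auto simp: \<phi>_def\<close>)
  also have "\<dots> = (3 * s + 2) * card (shadow k \<F>)" unfolding m_def by simp
  finally show ?thesis .
qed

end
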